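(* Let $G$ be a non-trivial finite abelian group, $H$ a subgroup of $G$, and let $f$ be an automorphism of $\mathcal{P}_{0}(G)$ with trivial pullback. Then: (1) $f(H)=H$, and $f$ restricts to an automorphism of $\mathcal{P}_{0}(H)$ with trivial pullback. (2) There is an isomorphism of monoids $\mathcal{P}_{0,H}(G)\simeq \mathcal{P}_{0}(G/H)$. Moreover, $f$ restricts to an automorphism of $\mathcal{P}_{0,H}(G)$. (3) For every nonzero $a\in G$, we have $f(G\setminus\{a\})=G\setminus\{b\}$ for some $b\in G$. Moreover, if $\operatorname{ord}(a)\geq 3$, then $f(G\setminus\{a\})=G\setminus\{a\}$.
   Context: For an additively written finite abelian group $G$, $\mathcal{P}_{0}(G)$ is the monoid of all subsets of $G$ containing $0$, with setwise addition $X+Y=\{x+y:x\in X,y\in Y\}$ and identity $\{0\}$. Every automorphism $f$ of $\mathcal{P}_0(G)$ maps $2$-element sets to $2$-element sets; the pullback of $f$ is the map $g:G\to G$ with $g(0)=0$ and $f(\{0,a\})=\{0,g(a)\}$ for nonzero $a$; $f$ has trivial pullback if $g$ is the identity, i.e. $f(\{0,a\})=\{0,a\}$ for all $a\in G$. For a subgroup $H$ of $G$, $\mathcal{P}_{0,H}(G)=H+\mathcal{P}_0(G)=\{H+X : X\in\mathcal{P}_0(G)\}$, the set of elements of $\mathcal{P}_0(G)$ divisible by $H$; it is a monoid under setwise addition with identity $H$. *)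

theory Defs
  imports Main
begin

text \<open>The ambient finite abelian group G is the universe of a type
  'a :: {finite, ab_group_add}.\<close>

definition sadd :: "'a::ab_group_add set \<Rightarrow> 'a set \<Rightarrow> 'a set" where
  "sadd X Y = {x + y | x y. x \<in> X \<and> y \<in> Y}"

definition P0 :: "'a::ab_group_add set set" where
  "P0 = {X. 0 \<in> X}"

definition P0_on :: "'a::ab_group_add set \<Rightarrow> 'a set set" where
  "P0_on H = {X. 0 \<in> X \<and> X \<subseteq> H}"

definition is_subgroup :: "'a::ab_group_add set \<Rightarrow> bool" where
  "is_subgroup H \<longleftrightarrow> 0 \<in> H \<and> (\<forall>x\<in>H. \<forall>y\<in>H. x + y \<in> H) \<and> (\<forall>x\<in>H. - x \<in> H)"

definition P0H :: "'a::ab_group_add set \<Rightarrow> 'a set set" where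
  "P0H H = {sadd H X | X. X \<in> P0}"

text \<open>Cosets a + H; the quotient group G/H is the set of cosets, with setwise
  addition of cosets as group operation and H as zero.\<close>
definition cosets :: "'a::ab_group_add set \<Rightarrow> 'a set set" where
  "cosets H = {sadd {a} H | a. True}"

definition qsadd :: "'a::ab_group_add set set \<Rightarrow> 'a set set \<Rightarrow> 'a set set" where
  "qsadd S T = {sadd c d | c d. c \<in> S \<and> d \<in> T}"

definition P0_quot :: "'a::ab_group_add set \<Rightarrow> 'a set set set" where
  "P0_quot H = {S. S \<subseteq> cosets H \<and> H \<in> S}"

definition monoid_aut :: "'b set \<Rightarrow> 'b \<Rightarrow> ('b \<Rightarrow> 'b \<Rightarrow> 'b) \<Rightarrow> ('b \<Rightarrow> 'b) \<Rightarrow> bool" where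
  "monoid_aut M e op f \<longleftrightarrow> bij_betw f M M \<and> f e = e \<and>
     (\<forall>X\<in>M. \<forall>Y\<in>M. f (op X Y) = op (f X) (f Y))"

definition monoid_iso :: "'b set \<Rightarrow> 'b \<Rightarrow> ('b \<Rightarrow> 'b \<Rightarrow> 'b) \<Rightarrow>
    'c set \<Rightarrow> 'c \<Rightarrow> ('c \<Rightarrow> 'c \<Rightarrow> 'c) \<Rightarrow> ('b \<Rightarrow> 'c) \<Rightarrow> bool" where
  "monoid_iso M e op M' e' op' \<phi> \<longleftrightarrow> bij_betw \<phi> M M' \<and> \<phi> e = e' \<and>
     (\<forall>X\<in>M. \<forall>Y\<in>M. \<phi> (op X Y) = op' (\<phi> X) (\<phi> Y))"

definition trivial_pullback :: "'a::ab_group_add set \<Rightarrow> ('a set \<Rightarrow> 'a set) \<Rightarrow> bool" where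
  "trivial_pullback A f \<longleftrightarrow> (\<forall>a\<in>A. f {0, a} = {0, a})"

primrec natmul :: "nat \<Rightarrow> 'a::ab_group_add \<Rightarrow> 'a" where
  "natmul 0 a = 0"
| "natmul (Suc n) a = a + natmul n a"

definition add_ord :: "'a::ab_group_add \<Rightarrow> nat" where
  "add_ord a = (LEAST n. 0 < n \<and> natmul n a = 0)"

end

theory Submission
  imports Defs
begin

lemma sadd_iff: "z \<in> sadd X Y \<longleftrightarrow> (\<exists>x\<in>X. \<exists>y\<in>Y. z = x + y)"
  unfolding sadd_def by blast

lemma sadd_assoc: "sadd (sadd X Y) Z = sadd X (sadd Y Z)"
  unfolding sadd_def by (auto, metis add.assoc, metis add.assoc)

lemma sadd_comm: "sadd X Y = sadd Y X"
  unfolding sadd_def by (auto, (metis add.commute)+)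

lemma sadd_P0: "X \<in> P0 \<Longrightarrow> Y \<in> P0 \<Longrightarrow> sadd X Y \<in> P0"
  unfolding P0_def sadd_def by force

lemma sadd_zero: "sadd {0} X = X"
  unfolding sadd_def by auto

lemma sub_closed:
  assumes "is_subgroup H" "finite T" "T \<subseteq> H" shows "sum id T \<in> H"
  using assms(2,3)
proof (induction T rule: finite_induct)
  case empty then show ?case using assms(1) by (simp add: is_subgroup_def)
next
  case (insert x F) then show ?case using assms(1) by (simp add: is_subgroup_def)
qed

definition sums :: "'a::ab_group_add set \<Rightarrow> 'a set" where
  "sums S = (\<lambda>T. sum id T) ` {T. T \<subseteq> S}"

lemma sums_insert:
  assumes "finite S" "x \<notin> S"
  shows "sums (insert x S) = sadd {0, x} (sums S)"
proof
  show "sums (insert x S) \<subseteq> sadd {0, x} (sums S)"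
  proof
    fix z assume "z \<in> sums (insert x S)"
    then obtain T where T: "T \<subseteq> insert x S" "z = sum id T" unfolding sums_def by blast
    have fT: "finite T" using T(1) assms(1) finite_subset by blast
    show "z \<in> sadd {0, x} (sums S)"
    proof (cases "x \<in> T")
      case True
      have "z = x + sum id (T - {x})" using T fT True by (simp add: sum.remove)
      moreover have "sum id (T - {x}) \<in> sums S" using T(1) unfolding sums_def by blast
      ultimately show ?thesis unfolding sadd_iff[of z] by blast
    next
      case False
      then have "T \<subseteq> S" using T(1) by blast
      then have zs: "z \<in> sums S" using T(2) unfolding sums_def by blast
      have "z = 0 + z" by simp
      then show ?thesis unfolding sadd_iff[of z] using zs by blast
    qed
  qed
next
  show "sadd {0, x} (sums S) \<subseteq> sums (insert x S)"
  proof
    fix z assume "z \<in> sadd {0, x} (sums S)"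
    then obtain e T where e: "e \<in> {0,x}" "T \<subseteq> S" "z = e + sum id T"
      unfolding sadd_iff sums_def by blast
    have fT: "finite T" using e(2) assms(1) finite_subset by blast
    show "z \<in> sums (insert x S)"
    proof (cases "e = 0")
      case True then show ?thesis using e unfolding sums_def by auto
    next
      case False
      then have "e = x" using e(1) by blast
      then have "z = sum id (insert x T)" using e assms fT by (subst sum.insert) auto
      moreover have "insert x T \<subseteq> insert x S" using e(2) by blast
      ultimately show ?thesis unfolding sums_def by blast
    qed
  qed
qed

lemma sums_P0: "sums S \<in> P0"
  unfolding sums_def P0_def by (rule CollectI, rule image_eqI[where x="{}"]) auto

lemma f_sums:
  assumes aut: "monoid_aut P0 {0} sadd f" and triv: "trivial_pullback UNIV f"
    and "finite S"
  shows "f (sums S) = sums S"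
  using assms(3)
proof (induction S rule: finite_induct)
  case empty
  have "sums {} = ({0}::'a set)" unfolding sums_def by auto
  then show ?case using aut unfolding monoid_aut_def by simp
next
  case (insert x F)
  have "{0, x} \<in> P0" unfolding P0_def by simp
  then have "f (sadd {0, x} (sums F)) = sadd (f {0,x}) (f (sums F))"
    using aut sums_P0 unfolding monoid_aut_def by blast
  then show ?case using insert(3) triv sums_insert[OF insert(1,2)] unfolding trivial_pullback_def by simp
qed

lemma sums_subgroup:
  fixes H :: "'a::{finite,ab_group_add} set"
  assumes "is_subgroup H" shows "sums H = H"
proof
  show "sums H \<subseteq> H" unfolding sums_def using sub_closed[OF assms] finite_subset by auto
  show "H \<subseteq> sums H"
  proof
    fix h assume "h \<in> H"
    then show "h \<in> sums H" unfolding sums_def by (auto intro!: image_eqI[where x="{h}"])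
  qed
qed

lemma f_subgroup:
  fixes H :: "'a::{finite,ab_group_add} set"
  assumes "is_subgroup H" "monoid_aut P0 {0} sadd f" "trivial_pullback UNIV f"
  shows "f H = H"
  using f_sums[OF assms(2,3), of H] sums_subgroup[OF assms(1)] by simp


lemma P0_finite: "finite (A :: 'a::finite set set)"
  by simp

lemma aut_facts:
  assumes "monoid_aut P0 {0} sadd f"
  shows "inj_on f P0" "\<And>X. X \<in> P0 \<Longrightarrow> f X \<in> P0" "f {0} = {0}"
    "\<And>X Y. X \<in> P0 \<Longrightarrow> Y \<in> P0 \<Longrightarrow> f (sadd X Y) = sadd (f X) (f Y)"
    "\<And>Y. Y \<in> P0 \<Longrightarrow> \<exists>X\<in>P0. Y = f X"
  using assms unfolding monoid_aut_def bij_betw_def by (auto, metis imageE)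

lemma subgroup_sadd_self:
  assumes "is_subgroup H" shows "sadd H H = H"
  using assms unfolding is_subgroup_def sadd_def by force

lemma coset_shift:
  assumes "is_subgroup H" "h \<in> H" shows "sadd {a + h} H = sadd {a} H"
proof
  show "sadd {a + h} H \<subseteq> sadd {a} H"
    using assms unfolding is_subgroup_def sadd_def by (force simp: add.assoc)
  show "sadd {a} H \<subseteq> sadd {a + h} H"
  proof
    fix z assume "z \<in> sadd {a} H"
    then obtain k where k: "k \<in> H" "z = a + k" unfolding sadd_def by blast
    have "k + - h \<in> H" using assms k unfolding is_subgroup_def by blast
    moreover have "z = (a + h) + (k + - h)" using k by (simp add: algebra_simps)
    ultimately show "z \<in> sadd {a + h} H" unfolding sadd_def by blast
  qed
qed

lemma coset_add:
  assumes sub: "is_subgroup H"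
  shows "sadd (sadd {x} H) (sadd {y} H) = sadd {x + y} H"
proof (rule set_eqI)
  fix z
  show "z \<in> sadd (sadd {x} H) (sadd {y} H) \<longleftrightarrow> z \<in> sadd {x + y} H"
  proof
    assume "z \<in> sadd (sadd {x} H) (sadd {y} H)"
    then obtain h1 h2 where h: "h1 \<in> H" "h2 \<in> H" "z = (x + h1) + (y + h2)"
      by (auto simp: sadd_iff)
    have "h1 + h2 \<in> H" using sub h unfolding is_subgroup_def by blast
    moreover have "z = (x + y) + (h1 + h2)" using h(3) by (simp add: algebra_simps)
    ultimately show "z \<in> sadd {x + y} H" unfolding sadd_iff by blast
  next
    assume "z \<in> sadd {x + y} H"
    then obtain h where h: "h \<in> H" "z = (x + y) + h" unfolding sadd_iff by auto
    have H0: "0 \<in> H" using sub unfolding is_subgroup_def by blast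
    have zz: "z = (x + h) + (y + 0)" using h(2) by (simp add: algebra_simps)
    have m1: "x + h \<in> sadd {x} H" using h(1) unfolding sadd_iff by blast
    have m2: "y + 0 \<in> sadd {y} H" using H0 unfolding sadd_iff by blast
    show "z \<in> sadd (sadd {x} H) (sadd {y} H)" using zz m1 m2 unfolding sadd_iff[of z] by blast
  qed
qed

lemma part1:
  fixes f :: "'a::{finite, ab_group_add} set \<Rightarrow> 'a set" and H :: "'a set"
  assumes sub: "is_subgroup H" and aut: "monoid_aut P0 {0} sadd f"
    and triv: "trivial_pullback UNIV f"
  shows "f H = H \<and> monoid_aut (P0_on H) {0} sadd f \<and> trivial_pullback H f"
proof -
  note A = aut_facts[OF aut]
  have fH: "f H = H" using f_subgroup[OF sub aut triv] .
  have H0: "H \<in> P0" using sub unfolding is_subgroup_def P0_def by simp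
  have sub0: "P0_on H \<subseteq> P0" unfolding P0_on_def P0_def by auto
  have into: "f ` P0_on H \<subseteq> P0_on H"
  proof
    fix Y assume "Y \<in> f ` P0_on H"
    then obtain X where X: "X \<in> P0_on H" "Y = f X" by blast
    have XP: "X \<in> P0" using X sub0 by blast
    have "sadd X H = H"
    proof
      show "sadd X H \<subseteq> H" using X(1) sub unfolding P0_on_def sadd_def is_subgroup_def by blast
      show "H \<subseteq> sadd X H" using X(1) unfolding P0_on_def sadd_def by force
    qed
    then have "sadd Y H = H" using A(4)[OF XP H0] fH X by simp
    moreover have "0 \<in> Y" using A(2)[OF XP] X unfolding P0_def by simp
    moreover have "Y \<subseteq> sadd Y H" using sub unfolding sadd_def is_subgroup_def by force
    ultimately show "Y \<in> P0_on H" unfolding P0_on_def by blast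
  qed
  have "bij_betw f (P0_on H) (P0_on H)"
    unfolding bij_betw_def using endo_inj_surj[OF P0_finite into] into inj_on_subset[OF A(1) sub0]
    by blast
  then have "monoid_aut (P0_on H) {0} sadd f"
    unfolding monoid_aut_def using A(3,4) sub0 by blast
  moreover have "trivial_pullback H f" using triv unfolding trivial_pullback_def by blast
  ultimately show ?thesis using fH by blast
qed

lemma part2a:
  fixes H :: "'a::{finite, ab_group_add} set"
  assumes sub: "is_subgroup H"
  shows "\<exists>\<phi>. monoid_iso (P0H H) H sadd (P0_quot H) {H} qsadd \<phi>"
proof -
  define \<phi> where "\<phi> X = (\<lambda>x. sadd {x} H) ` X" for X :: "'a set"
  have H0: "0 \<in> H" using sub unfolding is_subgroup_def by simp
  have cs0: "sadd {h} H = H" if "h \<in> H" for h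
    using coset_shift[OF sub that, of 0] sadd_zero by simp
  have union: "\<Union> (\<phi> X) = sadd X H" for X
  proof (rule set_eqI)
    fix z
    show "z \<in> \<Union> (\<phi> X) \<longleftrightarrow> z \<in> sadd X H"
      unfolding \<phi>_def by (auto simp: sadd_iff)
  qed
  have sat: "sadd X H = X" if XP: "X \<in> P0H H" for X
  proof -
    obtain Y where "X = sadd H Y" using XP unfolding P0H_def by blast
    then have "sadd X H = sadd H (sadd Y H)" by (simp add: sadd_assoc)
    also have "sadd Y H = sadd H Y" by (rule sadd_comm)
    also have "sadd H (sadd H Y) = sadd (sadd H H) Y" by (simp add: sadd_assoc)
    finally show ?thesis using subgroup_sadd_self[OF sub] \<open>X = sadd H Y\<close> by simp
  qed
  have P0H0: "0 \<in> X" if XP: "X \<in> P0H H" for X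
  proof -
    obtain Y where Y: "X = sadd H Y" "Y \<in> P0" using XP unfolding P0H_def by blast
    have "0 \<in> Y" using Y(2) unfolding P0_def by simp
    moreover have "(0::'a) = 0 + 0" by simp
    ultimately have "0 \<in> sadd H Y" unfolding sadd_iff using H0 by blast
    then show ?thesis using Y(1) by simp
  qed
  have inj: "inj_on \<phi> (P0H H)"
  proof (rule inj_onI)
    fix X X' assume X: "X \<in> P0H H" "X' \<in> P0H H" "\<phi> X = \<phi> X'"
    have "X = \<Union> (\<phi> X)" using union[of X] sat[OF X(1)] by simp
    also have "\<dots> = \<Union> (\<phi> X')" using X(3) by simp
    also have "\<dots> = X'" using union[of X'] sat[OF X(2)] by simp
    finally show "X = X'" .
  qed
  have into: "\<phi> X \<in> P0_quot H" if "X \<in> P0H H" for X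
  proof -
    have "\<phi> X \<subseteq> cosets H" unfolding \<phi>_def cosets_def by blast
    moreover have "H \<in> \<phi> X" unfolding \<phi>_def
      by (rule image_eqI[where x=0]) (simp_all add: sadd_zero P0H0[OF that])
    ultimately show ?thesis unfolding P0_quot_def by blast
  qed
  have self: "x \<in> sadd {x} H" for x
  proof -
    have "x = x + 0" by simp
    then show ?thesis unfolding sadd_iff using H0 by blast
  qed
  have onto: "S \<in> \<phi> ` P0H H" if "S \<in> P0_quot H" for S
  proof -
    have S: "S \<subseteq> cosets H" "H \<in> S" using that unfolding P0_quot_def by auto
    define X where "X = \<Union> S"
    have X0: "0 \<in> X" using S H0 unfolding X_def by blast
    have memc: "sadd {x} H = c" if cx: "c \<in> S" "x \<in> c" for c x
    proof -
      obtain a where a: "c = sadd {a} H" using S(1) cx(1) unfolding cosets_def by blast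
      have "x \<in> sadd {a} H" using cx(2) a by simp
      then obtain h where "h \<in> H" "x = a + h" unfolding sadd_iff by blast
      then show ?thesis using coset_shift[OF sub] a by simp
    qed
    have XH: "sadd H X = X"
    proof
      show "X \<subseteq> sadd H X"
      proof
        fix z assume "z \<in> X"
        moreover have "z = 0 + z" by simp
        ultimately show "z \<in> sadd H X" unfolding sadd_iff[of z] using H0 by blast
      qed
      show "sadd H X \<subseteq> X"
      proof
        fix z assume "z \<in> sadd H X"
        then obtain h x where hx0: "h \<in> H" "x \<in> X" "z = h + x"
          unfolding sadd_iff by blast
        then obtain c where hx: "c \<in> S" "x \<in> c" unfolding X_def by blast
        have "sadd {x + h} H = sadd {x} H" using coset_shift[OF sub hx0(1)] .
        then have "sadd {x + h} H = c" using memc[OF hx(1,2)] by simp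
        then have "x + h \<in> c" using self[of "x+h"] by simp
        then have "z \<in> c" using hx0(3) by (simp add: add.commute)
        then show "z \<in> X" using hx(1) unfolding X_def by blast
      qed
    qed
    have XP0: "X \<in> P0" using X0 unfolding P0_def by simp
    have XP: "X \<in> P0H H" unfolding P0H_def
    proof (rule CollectI, rule exI[of _ X])
      show "X = sadd H X \<and> X \<in> P0" using XH XP0 by simp
    qed
    have "\<phi> X = S"
    proof
      show "\<phi> X \<subseteq> S"
      proof
        fix c assume "c \<in> \<phi> X"
        then obtain x where x: "x \<in> X" "c = sadd {x} H" unfolding \<phi>_def by blast
        then obtain c' where c': "c' \<in> S" "x \<in> c'" unfolding X_def by blast
        have "c = c'" using memc[OF c'] x(2) by simp
        then show "c \<in> S" using c'(1) by simp
      qed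
      show "S \<subseteq> \<phi> X"
      proof
        fix c assume c: "c \<in> S"
        obtain a where a: "c = sadd {a} H" using S(1) c unfolding cosets_def by blast
        then have "a \<in> c" using self by simp
        then have "a \<in> X" using c unfolding X_def by blast
        then show "c \<in> \<phi> X" unfolding \<phi>_def using a by (rule rev_image_eqI)
      qed
    qed
    then show ?thesis using XP by (rule_tac image_eqI[of _ _ X]) simp_all
  qed
  have bij: "bij_betw \<phi> (P0H H) (P0_quot H)"
    unfolding bij_betw_def
  proof
    show "inj_on \<phi> (P0H H)" by (rule inj)
    show "\<phi> ` P0H H = P0_quot H" using into onto by blast
  qed
  have phiH: "\<phi> H = {H}"
  proof
    show "\<phi> H \<subseteq> {H}" unfolding \<phi>_def using cs0 by blast
    show "{H} \<subseteq> \<phi> H" unfolding \<phi>_def using cs0[OF H0] H0 by blast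
  qed
  have hom: "\<phi> (sadd X Y) = qsadd (\<phi> X) (\<phi> Y)" for X Y
  proof
    show "\<phi> (sadd X Y) \<subseteq> qsadd (\<phi> X) (\<phi> Y)"
    proof
      fix z assume "z \<in> \<phi> (sadd X Y)"
      then obtain w where w: "w \<in> sadd X Y" "z = sadd {w} H" unfolding \<phi>_def by blast
      then obtain x y where xy: "x \<in> X" "y \<in> Y" "w = x + y" unfolding sadd_iff by blast
      have "z = sadd (sadd {x} H) (sadd {y} H)" using w(2) xy(3) coset_add[OF sub] by simp
      moreover have "sadd {x} H \<in> \<phi> X" "sadd {y} H \<in> \<phi> Y" unfolding \<phi>_def using xy by blast+
      ultimately show "z \<in> qsadd (\<phi> X) (\<phi> Y)" unfolding qsadd_def by blast
    qed
    show "qsadd (\<phi> X) (\<phi> Y) \<subseteq> \<phi> (sadd X Y)"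
    proof
      fix z assume "z \<in> qsadd (\<phi> X) (\<phi> Y)"
      then obtain x y where xy: "x \<in> X" "y \<in> Y" "z = sadd (sadd {x} H) (sadd {y} H)"
        unfolding qsadd_def \<phi>_def by blast
      have zz: "z = sadd {x + y} H" using xy(3) coset_add[OF sub] by simp
      have "x + y \<in> sadd X Y" unfolding sadd_iff using xy(1,2) by blast
      then show "z \<in> \<phi> (sadd X Y)" unfolding \<phi>_def using zz by (rule rev_image_eqI)
    qed
  qed
  have "monoid_iso (P0H H) H sadd (P0_quot H) {H} qsadd \<phi>"
    unfolding monoid_iso_def using bij phiH hom by simp
  then show ?thesis by blast
qed

lemma part2b:
  fixes f :: "'a::{finite, ab_group_add} set \<Rightarrow> 'a set" and H :: "'a set"
  assumes sub: "is_subgroup H" and aut: "monoid_aut P0 {0} sadd f"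
    and triv: "trivial_pullback UNIV f"
  shows "monoid_aut (P0H H) H sadd f"
proof -
  note A = aut_facts[OF aut]
  have fH: "f H = H" using f_subgroup[OF sub aut triv] .
  have H0: "H \<in> P0" using sub unfolding is_subgroup_def P0_def by simp
  have sub0: "P0H H \<subseteq> P0" unfolding P0H_def using sadd_P0[OF H0] by blast
  have into: "f ` P0H H \<subseteq> P0H H"
  proof
    fix Z assume "Z \<in> f ` P0H H"
    then obtain Y where Y: "Y \<in> P0" "Z = f (sadd H Y)" unfolding P0H_def by blast
    then have "Z = sadd H (f Y)" using A(4)[OF H0 Y(1)] fH by simp
    then show "Z \<in> P0H H" using A(2)[OF Y(1)] unfolding P0H_def by blast
  qed
  have "bij_betw f (P0H H) (P0H H)"
    unfolding bij_betw_def using endo_inj_surj[OF P0_finite into] into inj_on_subset[OF A(1) sub0]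
    by blast
  then show ?thesis unfolding monoid_aut_def using fH A(4) sub0 by blast
qed


lemma l1: "(b::'a::ab_group_add) - a - a = b \<Longrightarrow> a + a = 0" by (simp add: algebra_simps)
lemma l2: "(b::'a::ab_group_add) - a - a = b - a \<Longrightarrow> a = 0" by simp
lemma l3: "a + (b - a - a) = (b::'a::ab_group_add) - a" by simp
lemma l4: "(a::'a::ab_group_add) + w = b \<Longrightarrow> w = b - a" by (simp add: eq_diff_eq add.commute)

lemma ord_ge3:
  fixes a :: "'a::ab_group_add"
  assumes "add_ord a \<ge> 3" shows "a + a \<noteq> 0"
proof
  assume "a + a = 0"
  then have "0 < (2::nat) \<and> natmul 2 a = 0" by (simp add: numeral_2_eq_2)
  then have "add_ord a \<le> 2" unfolding add_ord_def by (rule Least_le)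
  then show False using assms by simp
qed

lemma part3:
  fixes f :: "'a::{finite, ab_group_add} set \<Rightarrow> 'a set"
  assumes aut: "monoid_aut P0 {0} sadd f" and triv: "trivial_pullback UNIV f"
    and a0: "a \<noteq> 0"
  shows "(\<exists>b. f (UNIV - {a}) = UNIV - {b}) \<and> (add_ord a \<ge> 3 \<longrightarrow> f (UNIV - {a}) = UNIV - {a})"
proof -
  note A = aut_facts[OF aut]
  have subU: "is_subgroup (UNIV :: 'a set)" unfolding is_subgroup_def by simp
  have fU: "f UNIV = UNIV" using f_subgroup[OF subU aut triv] .
  define Y where "Y = f (UNIV - {a})"
  have XA: "UNIV - {a} \<in> P0" using a0 unfolding P0_def by simp
  have UP: "(UNIV :: 'a set) \<in> P0" unfolding P0_def by simp
  have YP: "Y \<in> P0" using A(2)[OF XA] Y_def by simp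
  have pairP: "{0, c} \<in> P0" for c :: 'a unfolding P0_def by simp
  have Yc: "sadd Y {0, c} = UNIV" if c0: "c \<noteq> 0" for c
  proof -
    have "sadd (UNIV - {a}) {0, c} = UNIV"
    proof (rule set_eqI, simp add: sadd_iff)
      fix g :: 'a
      show "\<exists>x\<in>UNIV - {a}. g = x \<or> g = x + c"
      proof (cases "g = a")
        case True then show ?thesis using c0 by (intro bexI[where x="g - c"]) auto
      qed auto
    qed
    then have "f (sadd (UNIV - {a}) {0, c}) = UNIV" using fU by simp
    moreover have "f {0, c} = {0, c}" using triv unfolding trivial_pullback_def by blast
    ultimately show ?thesis using A(4)[OF XA pairP] unfolding Y_def by simp
  qed
  have YU: "Y \<noteq> UNIV"
  proof
    assume "Y = UNIV"
    then have "f (UNIV - {a}) = f UNIV" using fU Y_def by simp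
    then have "UNIV - {a} = (UNIV :: 'a set)" by (rule inj_onD[OF A(1) _ XA UP])
    then show False by blast
  qed
  then obtain b where b: "b \<notin> Y" by blast
  have Yb: "Y = UNIV - {b}"
  proof (rule set_eqI)
    fix g
    show "g \<in> Y \<longleftrightarrow> g \<in> UNIV - {b}"
    proof (cases "g = b")
      case True then show ?thesis using b by simp
    next
      case False
      then have "b - g \<noteq> 0" by simp
      then have "b \<in> sadd Y {0, b - g}" using Yc[OF \<open>b - g \<noteq> 0\<close>] by simp
      then obtain y where y: "y \<in> Y" "b = y \<or> b = y + (b - g)" by (auto simp: sadd_iff)
      have "y = g" if "b = y + (b - g)"
      proof -
        have "y = b - (b - g)" using that by (simp add: eq_diff_eq)
        then show ?thesis by simp
      qed
      then have "g \<in> Y" using b y by auto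
      then show ?thesis using False by simp
    qed
  qed
  have part_b: "f (UNIV - {a}) = UNIV - {a}" if o3: "add_ord a \<ge> 3"
  proof (rule ccontr)
    assume ne: "f (UNIV - {a}) \<noteq> UNIV - {a}"
    have aa: "a + a \<noteq> 0" using ord_ge3[OF o3] .
    have bne: "b \<noteq> a" using ne Yb Y_def by auto
    have b0: "b \<noteq> 0" using YP Yb unfolding P0_def by auto
    define W where "W = UNIV - {b, b - a}"
    have WP: "W \<in> P0" using b0 bne unfolding W_def P0_def by auto
    have WY: "sadd {0, a} W = Y"
    proof (rule set_eqI)
      fix g
      show "g \<in> sadd {0, a} W \<longleftrightarrow> g \<in> Y"
      proof
        assume "g \<in> sadd {0, a} W"
        then obtain w where w: "w \<in> W" "g = w \<or> g = a + w" by (auto simp: sadd_iff)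
        have "g \<noteq> b"
        proof
          assume gb: "g = b"
          show False
          proof (cases "g = w")
            case True then show False using w(1) gb unfolding W_def by simp
          next
            case False
            then have "a + w = b" using w(2) gb by simp
            then have "w = b - a" by (rule l4)
            then show False using w(1) unfolding W_def by simp
          qed
        qed
        then show "g \<in> Y" unfolding Yb by simp
      next
        assume g: "g \<in> Y"
        show "g \<in> sadd {0, a} W"
        proof (cases "g \<in> W")
          case True
          have "g = 0 + g" by simp
          then show ?thesis unfolding sadd_iff using True by blast
        next
          case False
          then have gba: "g = b - a" using g unfolding Yb W_def by simp
          have n1: "b - a - a \<noteq> b" using aa l1 by blast
          have n2: "b - a - a \<noteq> b - a" using a0 l2 by blast
          have m: "b - a - a \<in> W" using n1 n2 unfolding W_def by simp
          have "g = a + (b - a - a)" using gba l3 by simp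
          then show ?thesis unfolding sadd_iff using m by blast
        qed
      qed
    qed
    obtain V where V: "V \<in> P0" "W = f V" using A(5)[OF WP] by blast
    have e: "f (sadd {0, a} V) = sadd (f {0, a}) (f V)" using A(4)[OF pairP V(1)] .
    have fa: "f {0, a} = {0, a}" using triv unfolding trivial_pullback_def by blast
    have "f (sadd {0, a} V) = sadd {0, a} W" using e fa V(2) by simp
    then have "f (sadd {0, a} V) = f (UNIV - {a})" using WY Y_def by simp
    then have "sadd {0, a} V = UNIV - {a}"
      by (rule inj_onD[OF A(1) _ sadd_P0[OF pairP V(1)] XA])
    moreover have "a \<in> sadd {0, a} V"
    proof -
      have "0 \<in> V" using V(1) unfolding P0_def by simp
      then show ?thesis unfolding sadd_iff by (rule_tac bexI[of _ a], rule_tac bexI[of _ 0]) simp_all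
    qed
    ultimately show False by blast
  qed
  show ?thesis
  proof (intro conjI impI)
    show "\<exists>b. f (UNIV - {a}) = UNIV - {b}" using Yb unfolding Y_def by (rule exI)
    show "f (UNIV - {a}) = UNIV - {a}" if "add_ord a \<ge> 3" using part_b[OF that] .
  qed
qed

theorem lemma3p1:
  fixes f :: "'a::{finite, ab_group_add} set \<Rightarrow> 'a set"
    and H :: "'a set"
  assumes nontriv: "card (UNIV :: 'a set) > 1"
    and sub: "is_subgroup H"
    and aut: "monoid_aut P0 {0} sadd f"
    and triv: "trivial_pullback UNIV f"
  shows "(f H = H \<and> monoid_aut (P0_on H) {0} sadd f \<and> trivial_pullback H f)
    \<and> ((\<exists>\<phi>. monoid_iso (P0H H) H sadd (P0_quot H) {H} qsadd \<phi>)
        \<and> monoid_aut (P0H H) H sadd f)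
    \<and> (\<forall>a. a \<noteq> 0 \<longrightarrow>
          (\<exists>b. f (UNIV - {a}) = UNIV - {b})
          \<and> (add_ord a \<ge> 3 \<longrightarrow> f (UNIV - {a}) = UNIV - {a}))"
  using part1[OF sub aut triv] part2a[OF sub] part2b[OF sub aut triv] part3[OF aut triv]
  by blast

end
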